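(* Let $\alpha = 1-\frac{1}{W_{-1}(-2/e^3)+1}\approx 1.3871$ (equivalently, $1-1/\alpha$ is the solution $x$ of $3+\ln(1/2)=\ln(x)+1/x$ used to define it). For $\epsilon>0$, let $\mathcal{S}_\epsilon=\{\ell = 1/2+i\epsilon : i\in\mathbb{N}_{>0},\ \ell\le 1/\alpha\}$, let $B\ge 1/\epsilon$ be an integer and $c>0$. Consider the linear program $(\mathrm{LP}_\epsilon)$ in variables $\alpha_\epsilon$, $N_0$ and $N_x$ ($x\in\mathcal{S}_\epsilon$): minimize $\alpha_\epsilon$ subject to $N_0+\sum_{x\in\mathcal{S}_\epsilon}(1-x)N_x\ge B-1/B^c$; $N_0+\sum_{x\in\mathcal{S}_\epsilon}N_x\le \alpha_\epsilon\cdot B$; $N_0+\sum_{x\in\mathcal{S}_\epsilon,\,x\le t-\epsilon}N_x+\lfloor \frac{B}{1-t}\rfloor\le \alpha_\epsilon\cdot\lceil\frac{B}{1-t}\rceil$ for all $t\in\mathcal{S}_\epsilon$; $N_x\ge 0$. Then the optimal value $\alpha^\star_\epsilon$ of $(\mathrm{LP}_\epsilon)$ satisfies $\alpha^\star_\epsilon\in[\alpha-O(\epsilon),\alpha+O(\epsilon)]$. *)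

theory Defs
  imports Complex_Main
begin

definition lambertW_m1 :: "real \<Rightarrow> real" where
  "lambertW_m1 y = (THE w. w \<le> -1 \<and> w * exp w = y)"

definition alpha_star :: real where
  "alpha_star = 1 - 1 / (lambertW_m1 (-2 / exp 3) + 1)"

definition S_eps :: "real \<Rightarrow> real set" where
  "S_eps \<epsilon> = {l. \<exists>i::nat. i > 0 \<and> l = 1/2 + real i * \<epsilon> \<and> l \<le> 1 / alpha_star}"

text \<open>Feasibility for (LP_eps): a is the objective variable alpha_eps, N0 and N x (x in S_eps).\<close>
definition LP_feasible ::
  "real \<Rightarrow> nat \<Rightarrow> real \<Rightarrow> real \<Rightarrow> real \<Rightarrow> (real \<Rightarrow> real) \<Rightarrow> bool" where
  "LP_feasible \<epsilon> B c a N0 N \<longleftrightarrow>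
     N0 \<ge> 0 \<and> (\<forall>x\<in>S_eps \<epsilon>. N x \<ge> 0) \<and>
     N0 + (\<Sum>x\<in>S_eps \<epsilon>. (1 - x) * N x) \<ge> real B - 1 / (real B powr c) \<and>
     N0 + (\<Sum>x\<in>S_eps \<epsilon>. N x) \<le> a * real B \<and>
     (\<forall>t\<in>S_eps \<epsilon>.
        N0 + (\<Sum>x\<in>{x\<in>S_eps \<epsilon>. x \<le> t - \<epsilon>}. N x) + of_int \<lfloor>real B / (1 - t)\<rfloor>
          \<le> a * of_int \<lceil>real B / (1 - t)\<rceil>)"

definition LP_opt :: "real \<Rightarrow> nat \<Rightarrow> real \<Rightarrow> real" where
  "LP_opt \<epsilon> B c = Inf {a. \<exists>N0 N. LP_feasible \<epsilon> B c a N0 N}"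

end

theory Submission
  imports Defs
begin

lemma exp_strict: "0 < (d::real) \<Longrightarrow> 1 + d < exp d"
proof -
  assume d: "0 < d"
  have "exp d = exp (d/2) * exp (d/2)" by (simp flip: exp_add)
  have h1: "1 + d/2 \<le> exp (d/2)" by (rule exp_ge_add_one_self)
  have h0: "0 \<le> 1 + d/2" using d by simp
  have "(1 + d/2) * (1 + d/2) \<le> exp (d/2) * exp (d/2)"
    using mult_mono[OF h1 h1 _ h0] by simp
  moreover have "0 < d * d" using d by simp
  hence "1 + d < (1 + d/2) * (1 + d/2)" by (simp add: algebra_simps)
  ultimately show ?thesis using \<open>exp d = _\<close> by linarith
qed
lemma wexp_mono:
  fixes w1 w2 :: real
  assumes "w1 < w2" "w2 \<le> -1"
  shows "w2 * exp w2 < w1 * exp w1"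
proof -
  define d where "d = w2 - w1"
  have d: "d > 0" using assms d_def by simp
  have e1: "exp w2 = exp w1 * exp d" by (simp add: d_def flip: exp_add)
  have "d < (-w2) * (exp d - 1)"
  proof -
    have "d < exp d - 1" using exp_strict[OF d] by simp
    also have "\<dots> \<le> (-w2) * (exp d - 1)" using assms d mult_right_mono[of 1 "-w2" "exp d - 1"] by simp
    finally show ?thesis .
  qed
  hence "d < w2 - w2 * exp d" by (simp add: algebra_simps)
  moreover have "w1 = w2 - d" by (simp add: d_def)
  ultimately have "w2 * exp d < w1" by linarith
  hence "exp w1 * (w2 * exp d) < exp w1 * w1" by simp
  thus ?thesis by (simp add: e1 algebra_simps)
qed

lemma W_val:
  obtains w where "-10 \<le> w" "w \<le> -3" "lambertW_m1 (-2 / exp 3) = w" "w * exp w = -2 / exp 3"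
proof -
  let ?f = "\<lambda>w::real. w * exp w"
  have f1: "?f (-3) \<le> -2 / exp 3" by (simp add: exp_minus field_simps)
  have "exp (7::real) \<ge> 1 + 7" by (rule exp_ge_add_one_self)
  hence "5 < exp (7::real)" by simp
  hence "5 * exp (3::real) < exp 7 * exp 3" by simp
  hence "5 * exp (3::real) < exp 10" by (simp flip: exp_add)
  hence f2: "-2 / exp 3 \<le> ?f (-10)" by (simp add: exp_minus field_simps)
  obtain w where w: "-10 \<le> w" "w \<le> -3" "?f w = -2 / exp 3"
    using IVT2[of ?f "-3" "-2/exp 3" "-10", OF f1 f2] by (auto intro!: continuous_intros)
  have "lambertW_m1 (-2 / exp 3) = w"
    unfolding lambertW_m1_def
  proof (rule the_equality)
    show "w \<le> -1 \<and> w * exp w = -2 / exp 3" using w by simp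
  next
    fix v :: real assume v: "v \<le> -1 \<and> v * exp v = -2 / exp 3"
    show "v = w"
    proof (rule ccontr)
      assume "v \<noteq> w"
      hence "v < w \<or> w < v" by linarith
      moreover have "\<not> v < w"
      proof
        assume "v < w" from wexp_mono[OF this] w v show False by simp
      qed
      moreover have "\<not> w < v"
      proof
        assume "w < v" from wexp_mono[OF this] w v show False by simp
      qed
      ultimately show False by blast
    qed
  qed
  thus ?thesis using that w by blast
qed

lemma x0_facts:
  obtains x0 :: real where "1/10 \<le> x0" "x0 \<le> 1/3" "alpha_star = 1/(1-x0)"
    "ln x0 = 3 - ln 2 - 1/x0"
proof -
  obtain w where w: "-10 \<le> w" "w \<le> -3" "lambertW_m1 (-2 / exp 3) = w" "w * exp w = -2 / exp 3"
    by (rule W_val)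
  define x0 where "x0 = -1/w"
  have a: "alpha_star = 1/(1-x0)" using w unfolding alpha_star_def x0_def by (simp add: field_simps)
  have "(-w) * exp w = 2 * exp (-3)" using w(4) by (simp add: exp_minus field_simps)
  hence "ln ((-w) * exp w) = ln (2 * exp (-3))" by simp
  moreover have "ln ((-w) * exp w) = ln (-w) + w" using w ln_mult[of "-w" "exp w"] by simp
  moreover have "ln (2 * exp (-3::real)) = ln 2 - 3" using ln_mult[of 2 "exp (-3::real)"] by simp
  ultimately have "ln (-w) + w = ln 2 - 3" by simp
  moreover have "ln x0 = - ln (-w)"
  proof -
    have "x0 = inverse (-w)" unfolding x0_def by (simp add: divide_inverse)
    thus ?thesis using ln_inverse[of "-w"] w by simp
  qed
  moreover have "1/x0 = -w" unfolding x0_def by simp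
  ultimately have "ln x0 = 3 - ln 2 - 1/x0" by simp
  moreover have "1/10 \<le> x0" "x0 \<le> 1/3" using w unfolding x0_def by (auto simp: field_simps)
  ultimately show ?thesis using that a by blast
qed


definition tt :: "real \<Rightarrow> nat \<Rightarrow> real" where "tt e i = 1/2 + real i * e"
definition nn :: "real \<Rightarrow> nat" where "nn e = nat \<lfloor>(1/alpha_star - 1/2)/e\<rfloor>"

lemma real_le_nat_floor: "0 \<le> (r::real) \<Longrightarrow> (real j \<le> r) = (j \<le> nat \<lfloor>r\<rfloor>)"
proof -
  assume r: "0 \<le> r"
  have "(j \<le> nat \<lfloor>r\<rfloor>) = (int j \<le> \<lfloor>r\<rfloor>)" using le_nat_iff[of "\<lfloor>r\<rfloor>" j] r by simp
  also have "\<dots> = (real j \<le> r)" by (simp add: le_floor_iff)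
  finally show ?thesis by simp
qed

lemma idx:
  assumes e: "e > 0" and p: "1/2 \<le> 1/alpha_star"
  shows "(tt e j \<le> 1/alpha_star) = (j \<le> nn e)"
proof -
  have "(tt e j \<le> 1/alpha_star) = (real j * e \<le> 1/alpha_star - 1/2)" unfolding tt_def by linarith
  also have "\<dots> = (real j \<le> (1/alpha_star - 1/2)/e)" using e by (simp add: pos_le_divide_eq)
  also have "\<dots> = (j \<le> nn e)" unfolding nn_def
    by (rule real_le_nat_floor) (use e p in simp)
  finally show ?thesis .
qed

lemma inj_tt: "e > 0 \<Longrightarrow> inj (tt e)"
  unfolding inj_def tt_def by simp

lemma S_img:
  assumes e: "e > 0" and p: "1/2 \<le> 1/alpha_star"
  shows "S_eps e = tt e ` {1..nn e}"
proof -
  have "S_eps e = {l. \<exists>i. 0 < i \<and> l = tt e i \<and> tt e i \<le> 1/alpha_star}"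
    unfolding S_eps_def tt_def by auto
  also have "\<dots> = {l. \<exists>i. 0 < i \<and> l = tt e i \<and> i \<le> nn e}" using idx[OF e p] by simp
  also have "\<dots> = tt e ` {1..nn e}"
  proof (rule set_eqI, rule iffI)
    fix l assume "l \<in> {l. \<exists>i. 0 < i \<and> l = tt e i \<and> i \<le> nn e}"
    then obtain i where i: "0 < i" "l = tt e i" "i \<le> nn e" by blast
    hence "i \<in> {1..nn e}" by simp
    thus "l \<in> tt e ` {1..nn e}" using i(2) by blast
  next
    fix l assume "l \<in> tt e ` {1..nn e}"
    then obtain i where i: "i \<in> {1..nn e}" "l = tt e i" by blast
    hence "0 < i" "i \<le> nn e" by auto
    thus "l \<in> {l. \<exists>i. 0 < i \<and> l = tt e i \<and> i \<le> nn e}" using i(2) by blast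
  qed
  finally show ?thesis .
qed

lemma sum_S:
  assumes e: "e > 0" and p: "1/2 \<le> 1/alpha_star"
  shows "sum g (S_eps e) = (\<Sum>i=1..nn e. g (tt e i))"
proof -
  have "sum g (tt e ` {1..nn e}) = sum (g \<circ> tt e) {1..nn e}"
    by (rule sum.reindex) (rule inj_on_subset[OF inj_tt[OF e] subset_UNIV])
  thus ?thesis unfolding S_img[OF e p] comp_def .
qed

lemma sub_img:
  assumes e: "e > 0" and p: "1/2 \<le> 1/alpha_star" and k: "k \<le> nn e"
  shows "{x\<in>S_eps e. x \<le> tt e k - e} = tt e ` {1..<k}"
proof -
  have lt: "(tt e i \<le> tt e k - e) = (i < k)" for i
  proof -
    have "(tt e i \<le> tt e k - e) = ((real i + 1) * e \<le> real k * e)" unfolding tt_def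
      by (simp add: algebra_simps)
    also have "\<dots> = (real i + 1 \<le> real k)" using e by simp
    also have "\<dots> = (i < k)" by linarith
    finally show ?thesis .
  qed
  show ?thesis unfolding S_img[OF e p]
  proof (rule set_eqI, rule iffI)
    fix x assume "x \<in> {x \<in> tt e ` {1..nn e}. x \<le> tt e k - e}"
    then obtain i where i: "i \<in> {1..nn e}" "x = tt e i" "tt e i \<le> tt e k - e" by blast
    hence "i \<in> {1..<k}" using lt[of i] by simp
    thus "x \<in> tt e ` {1..<k}" using i by blast
  next
    fix x assume "x \<in> tt e ` {1..<k}"
    then obtain i where i: "i \<in> {1..<k}" "x = tt e i" by blast
    hence "i \<in> {1..nn e}" "tt e i \<le> tt e k - e" using k lt[of i] by auto
    thus "x \<in> {x \<in> tt e ` {1..nn e}. x \<le> tt e k - e}" using i by blast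
  qed
qed

lemma sum_sub:
  assumes e: "e > 0" and p: "1/2 \<le> 1/alpha_star" and k: "k \<le> nn e"
  shows "sum g {x\<in>S_eps e. x \<le> tt e k - e} = (\<Sum>i=1..<k. g (tt e i))"
proof -
  have "sum g (tt e ` {1..<k}) = sum (g \<circ> tt e) {1..<k}"
    by (rule sum.reindex) (rule inj_on_subset[OF inj_tt[OF e] subset_UNIV])
  thus ?thesis unfolding sub_img[OF e p k] comp_def .
qed

lemma feas_iff:
  assumes e: "e > 0" and p: "1/2 \<le> 1/alpha_star"
  shows "LP_feasible e B c a N0 N \<longleftrightarrow>
     N0 \<ge> 0 \<and> (\<forall>i\<in>{1..nn e}. N (tt e i) \<ge> 0) \<and>
     N0 + (\<Sum>i=1..nn e. (1 - tt e i) * N (tt e i)) \<ge> real B - 1 / (real B powr c) \<and>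
     N0 + (\<Sum>i=1..nn e. N (tt e i)) \<le> a * real B \<and>
     (\<forall>k\<in>{1..nn e}.
        N0 + (\<Sum>i=1..<k. N (tt e i)) + of_int \<lfloor>real B / (1 - tt e k)\<rfloor>
          \<le> a * of_int \<lceil>real B / (1 - tt e k)\<rceil>)"
proof -
  have s3: "(\<forall>t\<in>S_eps e. Q t) = (\<forall>k\<in>{1..nn e}. Q (tt e k))" for Q
    by (simp add: S_img[OF e p])
  have s4: "(\<forall>k\<in>{1..nn e}.
        N0 + sum N {x\<in>S_eps e. x \<le> tt e k - e} + of_int \<lfloor>real B / (1 - tt e k)\<rfloor>
          \<le> a * of_int \<lceil>real B / (1 - tt e k)\<rceil>) =
     (\<forall>k\<in>{1..nn e}.
        N0 + (\<Sum>i=1..<k. N (tt e i)) + of_int \<lfloor>real B / (1 - tt e k)\<rfloor>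
          \<le> a * of_int \<lceil>real B / (1 - tt e k)\<rceil>)"
  proof (rule ball_cong[OF refl])
    fix k assume "k \<in> {1..nn e}"
    hence "sum N {x\<in>S_eps e. x \<le> tt e k - e} = (\<Sum>i=1..<k. N (tt e i))"
      by (intro sum_sub[OF e p]) simp
    thus "(N0 + sum N {x\<in>S_eps e. x \<le> tt e k - e} + of_int \<lfloor>real B / (1 - tt e k)\<rfloor>
          \<le> a * of_int \<lceil>real B / (1 - tt e k)\<rceil>) =
        (N0 + (\<Sum>i=1..<k. N (tt e i)) + of_int \<lfloor>real B / (1 - tt e k)\<rfloor>
          \<le> a * of_int \<lceil>real B / (1 - tt e k)\<rceil>)" by simp
  qed
  show ?thesis
    unfolding LP_feasible_def sum_S[OF e p, of "\<lambda>x. (1-x) * N x"] sum_S[OF e p, of N]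
      s3[of "\<lambda>x. N x \<ge> 0"]
      s3[of "\<lambda>t. N0 + sum N {x\<in>S_eps e. x \<le> t - e} + of_int \<lfloor>real B / (1 - t)\<rfloor>
          \<le> a * of_int \<lceil>real B / (1 - t)\<rceil>"] s4 ..
qed



lemma tt_Suc: "tt e (Suc i) = tt e i + e" unfolding tt_def by (simp add: algebra_simps)

lemma abel:
  fixes u :: "nat \<Rightarrow> real"
  assumes "1 \<le> n"
  shows "N0 + (\<Sum>i=1..n. (1 - tt e i) * u i) =
    tt e 1 * N0 + e * (\<Sum>k=2..n. N0 + (\<Sum>i=1..<k. u i)) + (1 - tt e n) * (N0 + (\<Sum>i=1..n. u i))"
  using assms
proof (induction n rule: nat_induct_at_least)
  case base
  show ?case by (simp add: algebra_simps)
next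
  case (Suc n)
  define A where "A = (\<Sum>i=1..n. u i)"
  define F where "F = (\<Sum>k=2..n. N0 + (\<Sum>i=1..<k. u i))"
  define L where "L = (\<Sum>i=1..n. (1 - tt e i) * u i)"
  have s1: "(\<Sum>i=1..Suc n. u i) = A + u (Suc n)" unfolding A_def using Suc.hyps by simp
  have s2: "(\<Sum>i=1..Suc n. (1 - tt e i) * u i) = L + (1 - tt e (Suc n)) * u (Suc n)"
    unfolding L_def using Suc.hyps by simp
  have s3: "(\<Sum>k=2..Suc n. N0 + (\<Sum>i=1..<k. u i)) = F + (N0 + A)"
  proof -
    have "(\<Sum>i=1..<Suc n. u i) = A" unfolding A_def by (simp add: atLeastLessThanSuc_atLeastAtMost)
    moreover have "(\<Sum>k=2..Suc n. N0 + (\<Sum>i=1..<k. u i)) = F + (N0 + (\<Sum>i=1..<Suc n. u i))"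
      unfolding F_def using Suc.hyps by simp
    ultimately show ?thesis by simp
  qed
  have IH: "N0 + L = tt e 1 * N0 + e * F + (1 - tt e n) * (N0 + A)"
    using Suc.IH unfolding L_def F_def A_def .
  show ?case unfolding s1 s2 s3 tt_Suc using IH by (simp add: algebra_simps)
qed

lemma log_bounds:
  fixes s e :: real
  assumes "0 < e" "e < s"
  shows "e / s \<le> ln s - ln (s - e)" "ln s - ln (s - e) \<le> e / (s - e)"
proof -
  have "ln (s / (s - e)) \<le> s / (s - e) - 1" by (rule ln_le_minus_one) (use assms in simp)
  moreover have "ln (s / (s - e)) = ln s - ln (s - e)" using assms by (simp add: ln_div)
  moreover have "s / (s - e) - 1 = e / (s - e)" using assms by (simp add: field_simps)
  ultimately show "ln s - ln (s - e) \<le> e / (s - e)" by simp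
  have "ln ((s - e) / s) \<le> (s - e) / s - 1" by (rule ln_le_minus_one) (use assms in simp)
  moreover have "ln ((s - e) / s) = ln (s - e) - ln s" using assms by (simp add: ln_div)
  moreover have "(s - e) / s - 1 = - (e / s)" using assms by (simp add: field_simps)
  ultimately show "e / s \<le> ln s - ln (s - e)" by simp
qed

lemma sum_upper:
  assumes e: "0 < e" and n: "1 \<le> n" and pos: "0 < 1 - tt e (Suc n)"
  shows "(\<Sum>k=2..n. e / (1 - tt e k)) \<le> ln (1 - tt e 2) - ln (1 - tt e (Suc n))"
  using n pos
proof (induction n rule: nat_induct_at_least)
  case base
  show ?case by (simp add: numeral_2_eq_2)
next
  case (Suc n)
  have p1: "0 < 1 - tt e (Suc n)" using Suc.prems e unfolding tt_Suc by simp
  have lb: "e / (1 - tt e (Suc n)) \<le> ln (1 - tt e (Suc n)) - ln (1 - tt e (Suc (Suc n)))"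
    using log_bounds(1)[of e "1 - tt e (Suc n)"] Suc.prems e unfolding tt_Suc[of e "Suc n"]
    by (simp add: algebra_simps)
  have "(\<Sum>k=2..Suc n. e / (1 - tt e k)) = (\<Sum>k=2..n. e / (1 - tt e k)) + e / (1 - tt e (Suc n))"
    using Suc.hyps by simp
  thus ?case using Suc.IH[OF p1] lb by linarith
qed

lemma sum_lower:
  assumes e: "0 < e" and n: "1 \<le> n" and pos: "0 < 1 - tt e n"
  shows "ln (1 - tt e 1) - ln (1 - tt e n) \<le> (\<Sum>i=1..<n. e / (1 - tt e (Suc i)))"
  using n pos
proof (induction n rule: nat_induct_at_least)
  case base
  show ?case by simp
next
  case (Suc n)
  have p1: "0 < 1 - tt e n" using Suc.prems e unfolding tt_Suc by simp
  have lb: "ln (1 - tt e n) - ln (1 - tt e (Suc n)) \<le> e / (1 - tt e (Suc n))"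
    using log_bounds(2)[of e "1 - tt e n"] Suc.prems e unfolding tt_Suc[of e n]
    by (simp add: algebra_simps)
  have "(\<Sum>i=1..<Suc n. e / (1 - tt e (Suc i))) = (\<Sum>i=1..<n. e / (1 - tt e (Suc i))) + e / (1 - tt e (Suc n))"
    using Suc.hyps by simp
  thus ?case using Suc.IH[OF p1] lb by linarith
qed

lemma n_facts:
  assumes x0: "1/10 \<le> x0" "x0 \<le> 1/3" "alpha_star = 1/(1-x0)"
    and e: "0 < e" "e \<le> 1/100"
  shows "1 \<le> nn e" "x0 \<le> 1 - tt e (nn e)" "1 - tt e (nn e) < x0 + e"
    "x0 - e \<le> 1 - tt e (Suc (nn e))" "1 - tt e (Suc (nn e)) < x0"
proof -
  have ia: "1/alpha_star = 1 - x0" unfolding x0(3) by simp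
  have p: "1/2 \<le> 1/alpha_star" using ia x0 by simp
  have "tt e 1 \<le> 1/alpha_star" using ia x0 e unfolding tt_def by simp
  thus "1 \<le> nn e" using idx[OF e(1) p] by simp
  have "tt e (nn e) \<le> 1/alpha_star" using idx[OF e(1) p] by simp
  thus "x0 \<le> 1 - tt e (nn e)" using ia by simp
  have "\<not> tt e (Suc (nn e)) \<le> 1/alpha_star" using idx[OF e(1) p, of "Suc (nn e)"] by simp
  hence "1 - x0 < tt e (nn e) + e" using ia unfolding tt_Suc by simp
  thus "1 - tt e (nn e) < x0 + e" by simp
  show "x0 - e \<le> 1 - tt e (Suc (nn e))" using \<open>tt e (nn e) \<le> 1/alpha_star\<close> ia unfolding tt_Suc by simp
  show "1 - tt e (Suc (nn e)) < x0" using \<open>1 - x0 < tt e (nn e) + e\<close> unfolding tt_Suc by simp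
qed

lemma final_arith:
  fixes a x0 e :: real
  assumes x0: "1/10 \<le> x0" "x0 \<le> 1/3" and e: "0 < e" and a1: "1 \<le> a" and a2: "a \<le> 3/2"
    and H: "1 - e \<le> (a - 1) * (1/x0 - 2 + 17*e) + 5/2*e + (x0 + e) * a"
  shows "1/(1-x0) - 11*e \<le> a"
proof -
  define Q where "Q = (a - 1) * (1/x0 - 2) + x0 * a"
  have "(a - 1) * (17*e) \<le> (1/2) * (17*e)" by (rule mult_right_mono) (use a2 e in auto)
  moreover have "e * a \<le> e * (3/2)" by (rule mult_left_mono) (use a2 e in auto)
  moreover have "(a - 1) * (1/x0 - 2 + 17*e) + 5/2*e + (x0 + e) * a = Q + (a-1)*(17*e) + 5/2*e + e * a"
    unfolding Q_def by (simp add: algebra_simps)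
  ultimately have hQ: "1 - 27/2 * e \<le> Q" using H by linarith
  have x0p: "0 < x0" using x0 by simp
  have "x0 * Q = a * (1-x0)^2 - 1 + 2 * x0" unfolding Q_def using x0p
    by (simp add: field_simps power2_eq_square)
  moreover have "x0 * (1 - 27/2 * e) \<le> x0 * Q" by (rule mult_left_mono[OF hQ]) (use x0p in simp)
  ultimately have h2: "1 - x0 - 27/2 * e * x0 \<le> a * (1-x0)^2" by (simp add: algebra_simps)
  have "27/2 * e * x0 \<le> 27/2 * e * (1/3)" by (rule mult_left_mono) (use x0 e in auto)
  hence h3: "1 - x0 - 9/2 * e \<le> a * (1-x0)^2" using h2 by linarith
  have sq: "4/9 \<le> (1-x0)^2"
  proof -
    have "(2/3::real)^2 \<le> (1-x0)^2" by (rule power_mono) (use x0 in auto)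
    thus ?thesis by (simp add: power2_eq_square)
  qed
  show ?thesis
  proof (rule ccontr)
    assume "\<not> ?thesis"
    hence lt: "a < 1/(1-x0) - 11*e" by simp
    have pos: "0 < (1-x0)^2" using x0 by simp
    have "a * (1-x0)^2 < (1/(1-x0) - 11*e) * (1-x0)^2" by (rule mult_strict_right_mono[OF lt pos])
    also have "\<dots> = (1 - x0) - 11 * e * (1-x0)^2" using x0 by (simp add: field_simps power2_eq_square)
    also have "\<dots> \<le> (1 - x0) - 11 * e * (4/9)"
      using mult_left_mono[OF sq, of "11*e"] e by simp
    finally show False using h3 e by simp
  qed
qed

lemma tt_mono: "0 < e \<Longrightarrow> i \<le> j \<Longrightarrow> tt e i \<le> tt e j"
  unfolding tt_def by (simp add: mult_right_mono)

lemma lower: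
  assumes x0: "1/10 \<le> x0" "x0 \<le> 1/3" "alpha_star = 1/(1-x0)" "ln x0 = 3 - ln 2 - 1/x0"
    and e: "0 < e" "e \<le> 1/100" and B: "1/e \<le> real B" and c: "0 < c"
    and F: "LP_feasible e B c a N0 N"
  shows "alpha_star - 11*e \<le> a"
proof (rule ccontr)
  assume "\<not> ?thesis"
  hence aa: "a < alpha_star - 11*e" by simp
  have ia: "1/alpha_star = 1 - x0" unfolding x0(3) by simp
  have p: "1/2 \<le> 1/alpha_star" using ia x0 by simp
  have al: "alpha_star \<le> 3/2" unfolding x0(3) using x0 by (simp add: field_simps)
  define n where "n = nn e"
  define u where "u = (\<lambda>i. N (tt e i))"
  have nf: "1 \<le> n" "x0 \<le> 1 - tt e n" "1 - tt e n < x0 + e"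
    "x0 - e \<le> 1 - tt e (Suc n)" "1 - tt e (Suc n) < x0"
    using n_facts[OF x0(1-3) e] unfolding n_def by auto
  have FF: "N0 \<ge> 0 \<and> (\<forall>i\<in>{1..n}. u i \<ge> 0) \<and>
     N0 + (\<Sum>i=1..n. (1 - tt e i) * u i) \<ge> real B - 1 / (real B powr c) \<and>
     N0 + (\<Sum>i=1..n. u i) \<le> a * real B \<and>
     (\<forall>k\<in>{1..n}.
        N0 + (\<Sum>i=1..<k. u i) + of_int \<lfloor>real B / (1 - tt e k)\<rfloor>
          \<le> a * of_int \<lceil>real B / (1 - tt e k)\<rceil>)"
    using feas_iff[OF e(1) p, of B c a N0 N] F unfolding n_def u_def by simp
  have F0: "0 \<le> N0" using FF by blast
  have Fu: "\<forall>i\<in>{1..n}. 0 \<le> u i" using FF by blast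
  have Fc: "real B - 1 / (real B powr c) \<le> N0 + (\<Sum>i=1..n. (1 - tt e i) * u i)" using FF by blast
  have Ft: "N0 + (\<Sum>i=1..n. u i) \<le> a * real B" using FF by blast
  have Fk: "\<forall>k\<in>{1..n}. N0 + (\<Sum>i=1..<k. u i) + of_int \<lfloor>real B / (1 - tt e k)\<rfloor>
          \<le> a * of_int \<lceil>real B / (1 - tt e k)\<rceil>" using FF by blast
  have eB: "1 \<le> e * real B" using B e by (simp add: pos_divide_le_eq mult.commute)
  have "100 \<le> 1/e" using e by (simp add: field_simps)
  hence B100: "100 \<le> real B" using B by linarith
  have bp: "1 \<le> real B powr c" by (rule ge_one_powr_ge_zero) (use B100 c in auto)
  hence "1 / (real B powr c) \<le> 1" by (auto simp: divide_le_eq_1)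
  hence cov: "real B - 1 \<le> N0 + (\<Sum>i=1..n. (1 - tt e i) * u i)" using Fc by linarith
  have tb: "0 \<le> tt e i \<and> tt e i \<le> 1 - x0" if "i \<in> {1..n}" for i
  proof -
    have "tt e i \<le> tt e n" using tt_mono[OF e(1)] that by simp
    moreover have "0 \<le> tt e i" unfolding tt_def using e by simp
    ultimately show ?thesis using nf by simp
  qed
  have "(\<Sum>i=1..n. (1 - tt e i) * u i) \<le> (\<Sum>i=1..n. u i)"
  proof (rule sum_mono)
    fix i assume i: "i \<in> {1..n}"
    have "(1 - tt e i) * u i \<le> 1 * u i" by (rule mult_right_mono) (use tb[OF i] Fu i in auto)
    thus "(1 - tt e i) * u i \<le> u i" by simp
  qed
  hence "real B - 1 \<le> a * real B" using cov Ft by linarith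
  hence apos: "0 \<le> a"
  proof -
    assume h: "real B - 1 \<le> a * real B"
    show "0 \<le> a"
    proof (rule ccontr)
      assume "\<not> 0 \<le> a"
      hence "a * real B \<le> 0" using B100 by (simp add: mult_nonpos_nonneg)
      thus False using h B100 by linarith
    qed
  qed
  define r where "r = (\<lambda>k. 1 / (1 - tt e k))"
  define cap where "cap = (\<lambda>k. (a - 1) * real B * r k + (a + 1))"
  have capk: "N0 + (\<Sum>i=1..<k. u i) \<le> cap k" if k: "k \<in> {1..n}" for k
  proof -
    define y where "y = real B * r k"
    have yy: "real B / (1 - tt e k) = y" unfolding y_def r_def by simp
    have f1: "y - 1 < of_int \<lfloor>y\<rfloor>" using floor_correct[of y] by simp
    have c1: "of_int \<lceil>y\<rceil> \<le> y + 1" using ceiling_correct[of y] by simp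
    have "a * of_int \<lceil>y\<rceil> \<le> a * (y + 1)" by (rule mult_left_mono[OF c1 apos])
    moreover have "N0 + (\<Sum>i=1..<k. u i) + of_int \<lfloor>real B / (1 - tt e k)\<rfloor> \<le> a * of_int \<lceil>real B / (1 - tt e k)\<rceil>"
      using Fk k by blast
    hence "N0 + (\<Sum>i=1..<k. u i) + of_int \<lfloor>y\<rfloor> \<le> a * of_int \<lceil>y\<rceil>" unfolding yy .
    moreover have "a * (y + 1) = a * y + a" by (simp add: algebra_simps)
    moreover have "cap k = (a - 1) * y + (a + 1)" unfolding cap_def y_def by (simp add: algebra_simps)
    moreover have "(a - 1) * y = a * y - y" by (simp add: algebra_simps)
    ultimately show ?thesis using f1 by linarith
  qed
  define T where "T = N0 + (\<Sum>i=1..n. u i)"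
  have ab: "N0 + (\<Sum>i=1..n. (1 - tt e i) * u i) =
    tt e 1 * N0 + e * (\<Sum>k=2..n. N0 + (\<Sum>i=1..<k. u i)) + (1 - tt e n) * T"
    unfolding T_def by (rule abel[OF nf(1)])
  have t1: "0 \<le> tt e 1" unfolding tt_def using e by simp
  have b1: "tt e 1 * N0 \<le> tt e 1 * cap 1"
    using mult_left_mono[OF capk[of 1] t1] nf by simp
  have b2: "e * (\<Sum>k=2..n. N0 + (\<Sum>i=1..<k. u i)) \<le> e * (\<Sum>k=2..n. cap k)"
    by (rule mult_left_mono) (rule sum_mono, rule capk, auto simp: e(1) less_imp_le)
  have b3: "(1 - tt e n) * T \<le> (1 - tt e n) * (a * real B)"
    by (rule mult_left_mono) (use Ft nf x0 in \<open>auto simp: T_def\<close>)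
  define K where "K = tt e 1 * r 1 + e * (\<Sum>k=2..n. r k)"
  have cs: "(\<Sum>k=2..n. cap k) = (a - 1) * real B * (\<Sum>k=2..n. r k) + (real n - 1) * (a + 1)"
  proof -
    have "(\<Sum>k=2..n. cap k) = (\<Sum>k=2..n. (a - 1) * real B * r k) + (\<Sum>k=2..n. (a + 1))"
      unfolding cap_def by (simp add: sum.distrib)
    also have "(\<Sum>k=2..n. (a + 1)) = (real n - 1) * (a + 1)" using nf(1) by (simp add: of_nat_diff)
    also have "(\<Sum>k=2..n. (a - 1) * real B * r k) = (a - 1) * real B * (\<Sum>k=2..n. r k)"
      by (simp add: sum_distrib_left)
    finally show ?thesis .
  qed
  have es: "e * (\<Sum>k=2..n. r k) = (\<Sum>k=2..n. e / (1 - tt e k))"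
    by (simp add: sum_distrib_left r_def)
  have r1: "tt e 1 * r 1 = tt e 1 / (1 - tt e 1)" by (simp add: r_def)
  have cap1: "cap 1 = (a - 1) * real B * r 1 + (a + 1)" by (simp add: cap_def)
  have tn: "tt e 1 + e * (real n - 1) = tt e n" unfolding tt_def by (simp add: algebra_simps)
  have main: "real B - 1 \<le> (a - 1) * real B * K + (a + 1) * tt e n + (1 - tt e n) * (a * real B)"
  proof -
    have "tt e 1 * cap 1 + e * (\<Sum>k=2..n. cap k) = (a - 1) * real B * K + (a + 1) * (tt e 1 + e * (real n - 1))"
      unfolding cs cap1 K_def by (simp add: algebra_simps)
    hence "tt e 1 * cap 1 + e * (\<Sum>k=2..n. cap k) = (a - 1) * real B * K + (a + 1) * tt e n"
      unfolding tn .
    thus ?thesis using cov ab b1 b2 b3 by linarith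
  qed
  have tn1: "tt e n \<le> 1" using nf x0 by simp
  have tn0: "0 \<le> tt e n" unfolding tt_def using e by simp
  have a52: "(a + 1) * tt e n \<le> 5/2 * (e * real B)"
  proof -
    have "(a + 1) * tt e n \<le> (a + 1) * 1" by (rule mult_left_mono[OF tn1]) (use apos in simp)
    hence "(a + 1) * tt e n \<le> a + 1" by simp
    thus ?thesis using aa al eB e by linarith
  qed
  have Kpos: "0 \<le> K"
  proof -
    have "0 \<le> tt e 1 / (1 - tt e 1)" using t1 e unfolding tt_def by simp
    moreover have "0 \<le> (\<Sum>k=2..n. e / (1 - tt e k))"
    proof (rule sum_nonneg)
      fix k assume "k \<in> {2..n}"
      hence "tt e k \<le> tt e n" using tt_mono[OF e(1)] by simp
      thus "0 \<le> e / (1 - tt e k)" using tn1 nf x0 e by simp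
    qed
    ultimately show ?thesis unfolding K_def r1 es by simp
  qed
  show False
  proof (cases "a < 1")
    case True
    have "(a - 1) * real B * K \<le> 0"
      using True B100 Kpos by (simp add: mult_nonpos_nonneg)
    moreover have "(1 - tt e n) * (a * real B) \<le> (x0 + e) * real B"
    proof -
      have "(1 - tt e n) * a \<le> (1 - tt e n) * 1" by (rule mult_left_mono) (use True nf x0 in auto)
      hence "(1 - tt e n) * a \<le> x0 + e" using nf by simp
      hence "((1 - tt e n) * a) * real B \<le> (x0 + e) * real B" by (rule mult_right_mono) simp
      thus ?thesis by (simp add: algebra_simps)
    qed
    moreover have "(x0 + e) * real B \<le> (1/2) * real B" by (rule mult_right_mono) (use x0 e in auto)
    moreover have "(a + 1) * tt e n \<le> a + 1" using mult_left_mono[OF tn1, of "a+1"] apos by simp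
    ultimately show False using main B100 True by linarith
  next
    case False
    hence a1: "1 \<le> a" by simp
    have Kb: "K \<le> 1/x0 - 2 + 17 * e"
    proof -
      have h1: "tt e 1 / (1 - tt e 1) \<le> 1 + 5 * e"
      proof -
        have ee: "e * e \<le> e * (1/100)" by (rule mult_left_mono) (use e in auto)
        have "(1 + 5 * e) * (1 - tt e 1) = 1/2 + 3/2 * e - 5 * (e * e)" unfolding tt_def by (simp add: algebra_simps)
        moreover have "tt e 1 = 1/2 + e" unfolding tt_def by simp
        ultimately have "tt e 1 \<le> (1 + 5 * e) * (1 - tt e 1)" using ee e by linarith
        moreover have "0 < 1 - tt e 1" unfolding tt_def using e by simp
        ultimately show ?thesis by (simp add: pos_divide_le_eq)
      qed
      have pn: "0 < 1 - tt e (Suc n)" using nf x0 e by simp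
      have h2: "(\<Sum>k=2..n. e / (1 - tt e k)) \<le> ln (1 - tt e 2) - ln (1 - tt e (Suc n))"
        by (rule sum_upper[OF e(1) nf(1) pn])
      have t2: "1 - tt e 2 = 1/2 - 2 * e" unfolding tt_def by simp
      have h3: "ln (1 - tt e 2) \<le> ln (1/2)" unfolding t2 using e by simp
      have x0e: "0 < x0 - e" using x0 e by simp
      have h4: "ln (x0 - e) \<le> ln (1 - tt e (Suc n))" using nf(4) x0e by simp
      have h5: "ln x0 - ln (x0 - e) \<le> e / (x0 - e)"
        using log_bounds(2)[of e x0] e x0 by simp
      have h6: "e / (x0 - e) \<le> 12 * e"
      proof -
        have "9/100 \<le> x0 - e" using x0 e by simp
        hence "e \<le> 12 * e * (x0 - e)" using e mult_left_mono[of "9/100" "x0 - e" "12*e"] by simp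
        thus ?thesis using x0e by (simp add: pos_divide_le_eq)
      qed
      have l2: "ln (1/2::real) = - ln 2" by (simp add: ln_div)
      show ?thesis unfolding K_def r1 es using h1 h2 h3 h4 h5 h6 l2 x0(4) by linarith
    qed
    define q where "q = 1/x0 - 2 + 17 * e"
    have m1: "(a - 1) * real B * K \<le> (a - 1) * real B * q" unfolding q_def
      by (rule mult_left_mono[OF Kb]) (use a1 B100 in simp)
    have m2: "(1 - tt e n) * (a * real B) \<le> (x0 + e) * (a * real B)"
      by (rule mult_right_mono) (use nf apos B100 in auto)
    have "real B * (1 - e) \<le> real B * ((a - 1) * q + 5/2*e + (x0 + e) * a)"
    proof -
      have "real B * (1 - e) = real B - e * real B" by (simp add: algebra_simps)
      moreover have "real B * ((a - 1) * q + 5/2*e + (x0 + e) * a) =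
        (a - 1) * real B * q + 5/2 * (e * real B) + (x0 + e) * (a * real B)"
        by (simp add: algebra_simps)
      ultimately show ?thesis using main m1 m2 a52 eB by linarith
    qed
    hence "1 - e \<le> (a - 1) * q + 5/2*e + (x0 + e) * a"
      using B100 by (simp add: mult_le_cancel_left_pos)
    hence H: "1 - e \<le> (a - 1) * (1/x0 - 2 + 17*e) + 5/2*e + (x0 + e) * a" unfolding q_def .
    have "1/(1-x0) - 11*e \<le> a"
      by (rule final_arith[OF x0(1,2) e(1) a1 _ H]) (use aa al e in linarith)
    thus False using aa x0(3) by simp
  qed
qed

lemma upper:
  assumes x0: "1/10 \<le> x0" "x0 \<le> 1/3" "alpha_star = 1/(1-x0)" "ln x0 = 3 - ln 2 - 1/x0"
    and e: "0 < e" "e \<le> 1/100" and B: "1/e \<le> real B"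
  shows "\<exists>N0 N. LP_feasible e B c (alpha_star * (1 + 14*e)) N0 N"
proof -
  have ia: "1/alpha_star = 1 - x0" unfolding x0(3) by simp
  have p: "1/2 \<le> 1/alpha_star" using ia x0 by simp
  define n where "n = nn e"
  have nf: "1 \<le> n" "x0 \<le> 1 - tt e n" "1 - tt e n < x0 + e"
    "x0 - e \<le> 1 - tt e (Suc n)" "1 - tt e (Suc n) < x0"
    using n_facts[OF x0(1-3) e] unfolding n_def by auto
  have eB: "1 \<le> e * real B" using B e by (simp add: pos_divide_le_eq mult.commute)
  have "100 \<le> 1/e" using e by (simp add: field_simps)
  hence B100: "100 \<le> real B" using B by linarith
  define a where "a = alpha_star * (1 + 14*e)"
  define b1 where "b1 = (alpha_star - 1) * (1 + 14*e)"
  define r where "r = (\<lambda>k. 1 / (1 - tt e k))"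
  define N0 where "N0 = b1 * real B * r 1"
  define N where "N = (\<lambda>x. if x + e \<le> 1 - x0 then b1 * real B * (1/(1-(x+e)) - 1/(1-x)) else 0)"
  define u where "u = (\<lambda>i. N (tt e i))"
  have am1: "alpha_star - 1 = x0 / (1 - x0)" unfolding x0(3) using x0 by (simp add: field_simps)
  have b1pos: "0 \<le> b1" unfolding b1_def am1 using x0 e by simp
  have tpos: "0 < 1 - tt e k" if "k \<le> n" for k
  proof -
    have "tt e k \<le> tt e n" by (rule tt_mono[OF e(1) that])
    thus ?thesis using nf x0 by simp
  qed
  have rpos: "0 < r k" if "k \<le> n" for k unfolding r_def using tpos[OF that] by simp
  have ueq: "u i = (if i < n then b1 * real B * (r (Suc i) - r i) else 0)" if i: "i \<in> {1..n}" for i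
  proof -
    have "(tt e i + e \<le> 1 - x0) = (Suc i \<le> n)"
      using idx[OF e(1) p, of "Suc i"] unfolding tt_Suc ia n_def .
    thus ?thesis unfolding u_def N_def r_def tt_Suc by simp
  qed
  have unonneg: "0 \<le> u i" if i: "i \<in> {1..n}" for i
  proof (cases "i < n")
    case True
    have "r i \<le> r (Suc i)"
    proof -
      have "0 < 1 - tt e (Suc i)" using tpos[of "Suc i"] True by simp
      moreover have "1 - tt e (Suc i) \<le> 1 - tt e i" unfolding tt_Suc using e by simp
      ultimately show ?thesis unfolding r_def by (simp add: frac_le)
    qed
    thus ?thesis using ueq[OF i] True b1pos B100 by simp
  next
    case False thus ?thesis using ueq[OF i] by simp
  qed
  have psum: "N0 + (\<Sum>i=1..<k. u i) = b1 * real B * r k" if k: "1 \<le> k" "k \<le> n" for k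
    using k
  proof (induction k rule: nat_induct_at_least)
    case base
    show ?case unfolding N0_def by simp
  next
    case (Suc k)
    have "(\<Sum>i=1..<Suc k. u i) = (\<Sum>i=1..<k. u i) + u k" using Suc.hyps by simp
    moreover have "u k = b1 * real B * (r (Suc k) - r k)" using ueq[of k] Suc.hyps Suc.prems by simp
    moreover have "N0 + (\<Sum>i=1..<k. u i) = b1 * real B * r k" using Suc.IH Suc.prems by simp
    ultimately show ?case by (simp add: algebra_simps)
  qed
  have un: "u n = 0" using ueq[of n] nf by simp
  have tot: "N0 + (\<Sum>i=1..n. u i) = b1 * real B * r n"
  proof -
    have "(\<Sum>i=1..n. u i) = (\<Sum>i=1..<Suc n. u i)" by (simp only: atLeastLessThanSuc_atLeastAtMost)
    also have "\<dots> = (\<Sum>i=1..<n. u i) + u n" using nf(1) by (simp add: sum.op_ivl_Suc)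
    finally have "(\<Sum>i=1..n. u i) = (\<Sum>i=1..<n. u i) + u n" .
    thus ?thesis using psum[of n] nf(1) un by simp
  qed
  have ct: "(1 - tt e i) * u i = b1 * real B * (e / (1 - tt e (Suc i)))" if i: "i \<in> {1..<n}" for i
  proof -
    define s where "s = 1 - tt e (Suc i)"
    have sp: "0 < s" unfolding s_def using tpos[of "Suc i"] i by simp
    have si: "1 - tt e i = s + e" unfolding s_def tt_Suc by simp
    have U: "u i = b1 * real B * (r (Suc i) - r i)" using ueq[of i] i by simp
    have R: "r (Suc i) - r i = 1/s - 1/(s+e)" unfolding r_def s_def[symmetric] si by simp
    have se: "s + e \<noteq> 0" using sp e by simp
    have H1: "(s + e) * (1/s - 1/(s+e)) = (s + e)/s - 1" using se by (simp add: right_diff_distrib)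
    have H2: "(s + e)/s = 1 + e/s" using sp by (simp add: add_divide_distrib)
    have H: "(s + e) * (1/s - 1/(s+e)) = e / s" unfolding H1 H2 by simp
    have U': "u i = b1 * real B * (1/s - 1/(s+e))" by (subst U) (subst R, rule refl)
    have "(1 - tt e i) * u i = b1 * real B * ((s + e) * (1/s - 1/(s+e)))"
      by (simp only: si U' mult_ac)
    also have "\<dots> = b1 * real B * (e / s)" by (simp only: H)
    finally show ?thesis unfolding s_def .
  qed
  have cov1: "N0 + (\<Sum>i=1..n. (1 - tt e i) * u i) = N0 + b1 * real B * (\<Sum>i=1..<n. e / (1 - tt e (Suc i)))"
  proof -
    have "(\<Sum>i=1..n. (1 - tt e i) * u i) = (\<Sum>i=1..<Suc n. (1 - tt e i) * u i)"
      by (simp only: atLeastLessThanSuc_atLeastAtMost)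
    also have "\<dots> = (\<Sum>i=1..<n. (1 - tt e i) * u i) + (1 - tt e n) * u n"
      using nf(1) by (simp add: sum.op_ivl_Suc)
    also have "(\<Sum>i=1..<n. (1 - tt e i) * u i) = (\<Sum>i=1..<n. b1 * real B * (e / (1 - tt e (Suc i))))"
      by (rule sum.cong[OF refl ct])
    finally show ?thesis using un by (simp add: sum_distrib_left)
  qed
  have sl: "ln (1 - tt e 1) - ln (1 - tt e n) \<le> (\<Sum>i=1..<n. e / (1 - tt e (Suc i)))"
    by (rule sum_lower[OF e(1) nf(1) tpos[OF order_refl]])
  have G: "1/x0 - 1 - 13 * e \<le> r 1 + (ln (1 - tt e 1) - ln (1 - tt e n))"
  proof -
    have r1: "2 \<le> r 1" unfolding r_def tt_def using e by (simp add: field_simps)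
    have t1: "1 - tt e 1 = 1/2 - e" unfolding tt_def by simp
    have g1: "ln (1/2) - ln (1/2 - e) \<le> e / (1/2 - e)" using log_bounds(2)[of e "1/2"] e by simp
    have g2: "e / (1/2 - e) \<le> 3 * e"
    proof -
      have "e \<le> 3 * e * (1/2 - e)" using e mult_left_mono[of "1/6" "1/2 - e" "3*e"] by simp
      thus ?thesis using e by (simp add: pos_divide_le_eq)
    qed
    have g3: "ln (1 - tt e n) \<le> ln (x0 + e)" using nf(2,3) x0 by simp
    have g4: "ln (x0 + e) - ln x0 \<le> e / x0" using log_bounds(2)[of e "x0 + e"] e x0 by simp
    have g5: "e / x0 \<le> 10 * e"
    proof -
      have "e \<le> 10 * e * x0" using e mult_left_mono[of "1/10" x0 "10*e"] x0 by simp
      thus ?thesis using x0 by (simp add: pos_divide_le_eq)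
    qed
    have l2: "ln (1/2::real) = - ln 2" by (simp add: ln_div)
    show ?thesis unfolding t1 using r1 g1 g2 g3 g4 g5 l2 x0(4) by linarith
  qed
  have bq: "1 \<le> b1 * (1/x0 - 1 - 13 * e)"
  proof -
    have q1: "b1 * (1/x0 - 1) = 1 + 14 * e" unfolding b1_def am1 using x0 by (simp add: field_simps)
    have "x0 / (1 - x0) \<le> 1/2" using x0 by (simp add: field_simps)
    hence "b1 \<le> 1/2 * (1 + 14 * e)" unfolding b1_def am1 by (rule mult_right_mono) (use e in simp)
    hence "b1 * (13 * e) \<le> (1/2 * (1 + 14 * e)) * (13 * e)" by (rule mult_right_mono) (use e in simp)
    moreover have "(1/2 * (1 + 14 * e)) * (13 * e) = 13/2 * e + 91 * (e * e)" by (simp add: algebra_simps)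
    moreover have "e * e \<le> e * (1/100)" by (rule mult_left_mono) (use e in auto)
    moreover have "b1 * (1/x0 - 1 - 13 * e) = b1 * (1/x0 - 1) - b1 * (13 * e)" by (simp add: algebra_simps)
    ultimately show ?thesis using q1 e by linarith
  qed
  have cov: "real B - 1 / (real B powr c) \<le> N0 + (\<Sum>i=1..n. (1 - tt e i) * u i)"
  proof -
    have "b1 * (1/x0 - 1 - 13 * e) \<le> b1 * (r 1 + (\<Sum>i=1..<n. e / (1 - tt e (Suc i))))"
      by (rule mult_left_mono) (use G sl b1pos in auto)
    hence "1 \<le> b1 * (r 1 + (\<Sum>i=1..<n. e / (1 - tt e (Suc i))))" using bq by linarith
    hence "real B * 1 \<le> real B * (b1 * (r 1 + (\<Sum>i=1..<n. e / (1 - tt e (Suc i)))))"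
      by (rule mult_left_mono) simp
    moreover have "0 \<le> 1 / (real B powr c)" by simp
    moreover have "N0 + b1 * real B * (\<Sum>i=1..<n. e / (1 - tt e (Suc i)))
       = real B * (b1 * (r 1 + (\<Sum>i=1..<n. e / (1 - tt e (Suc i)))))"
      unfolding N0_def by (simp add: algebra_simps)
    ultimately show ?thesis unfolding cov1 by linarith
  qed
  have totb: "N0 + (\<Sum>i=1..n. u i) \<le> a * real B"
  proof -
    have "r n \<le> 1 / x0" unfolding r_def using nf(2) x0 by (simp add: frac_le)
    hence "b1 * r n \<le> b1 * (1 / x0)" by (rule mult_left_mono[OF _ b1pos])
    moreover have "b1 * (1/x0) = a" unfolding b1_def a_def am1 x0(3) using x0 by (simp add: field_simps)
    ultimately have "b1 * r n \<le> a" by simp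
    hence "(b1 * r n) * real B \<le> a * real B" by (rule mult_right_mono) simp
    thus ?thesis unfolding tot by (simp add: algebra_simps)
  qed
  have "0 < 1 - x0" using x0(2) by linarith
  hence "0 < 1/(1-x0)" by (rule divide_pos_pos[OF zero_less_one])
  hence "0 < alpha_star" by (simp only: x0(3))
  hence apos: "0 \<le> a" unfolding a_def using e by simp
  have ab1: "b1 + 1 \<le> a" unfolding a_def b1_def using e by (simp add: algebra_simps)
  have caps: "N0 + (\<Sum>i=1..<k. u i) + of_int \<lfloor>real B / (1 - tt e k)\<rfloor>
          \<le> a * of_int \<lceil>real B / (1 - tt e k)\<rceil>" if k: "k \<in> {1..n}" for k
  proof -
    define y where "y = real B * r k"
    have yy: "real B / (1 - tt e k) = y" unfolding y_def r_def by simp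
    have y0: "0 \<le> y" unfolding y_def using rpos[of k] k by simp
    have "N0 + (\<Sum>i=1..<k. u i) = b1 * y" using psum[of k] k unfolding y_def by (simp add: algebra_simps)
    moreover have "of_int \<lfloor>y\<rfloor> \<le> y" by simp
    moreover have "(b1 + 1) * y \<le> a * y" by (rule mult_right_mono[OF ab1 y0])
    moreover have "a * y \<le> a * of_int \<lceil>y\<rceil>" by (rule mult_left_mono[OF _ apos]) simp
    moreover have "(b1 + 1) * y = b1 * y + y" by (simp add: algebra_simps)
    ultimately show ?thesis unfolding yy by linarith
  qed
  have N0pos: "0 \<le> N0" unfolding N0_def using b1pos rpos[OF nf(1)] by simp
  have "LP_feasible e B c a N0 N"
    unfolding feas_iff[OF e(1) p]
    using N0pos unonneg cov totb caps unfolding u_def n_def by blast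
  thus ?thesis unfolding a_def by blast
qed

lemma feas_nonneg:
  assumes B: "0 < real B" and F: "LP_feasible e B c a N0 N"
  shows "0 \<le> a"
proof -
  have "0 \<le> N0" "\<forall>x\<in>S_eps e. 0 \<le> N x" "N0 + (\<Sum>x\<in>S_eps e. N x) \<le> a * real B"
    using F unfolding LP_feasible_def by blast+
  moreover have "0 \<le> (\<Sum>x\<in>S_eps e. N x)" using calculation(2) by (simp add: sum_nonneg)
  ultimately have "0 \<le> a * real B" by linarith
  thus ?thesis using B by (simp add: zero_le_mult_iff)
qed

lemma feas_two:
  assumes x0: "1/10 \<le> x0" "x0 \<le> 1/3" "alpha_star = 1/(1-x0)"
    and e: "0 < e" and B: "0 < real B"
  shows "LP_feasible e B c 2 (real B) (\<lambda>_. 0)"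
  unfolding LP_feasible_def
proof (intro conjI ballI)
  have "0 \<le> 1 / real B powr c" by simp
  thus "real B - 1 / real B powr c \<le> real B + (\<Sum>x\<in>S_eps e. (1 - x) * 0)" by simp
  show "0 \<le> real B" using B by simp
  show "real B + (\<Sum>x\<in>S_eps e. 0) \<le> 2 * real B" using B by simp
next
  fix x assume "x \<in> S_eps e" thus "0 \<le> (0::real)" by simp
next
  fix t assume t: "t \<in> S_eps e"
  have ia: "1/alpha_star = 1 - x0" unfolding x0(3) by simp
  obtain i where i: "0 < i" "t = 1/2 + real i * e" "t \<le> 1/alpha_star" using t unfolding S_eps_def by blast
  have t0: "0 \<le> t" using i e by simp
  have t1: "t < 1" using i ia x0 by simp
  define y where "y = real B / (1 - t)"
  have "real B * 1 \<le> real B * (1 / (1 - t))"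
    by (rule mult_left_mono) (use t0 t1 B in \<open>simp_all add: field_simps\<close>)
  hence By: "real B \<le> y" unfolding y_def by simp
  have "of_int \<lfloor>y\<rfloor> \<le> y" "y \<le> of_int \<lceil>y\<rceil>" by simp_all
  hence "real B + of_int \<lfloor>y\<rfloor> \<le> 2 * of_int \<lceil>y\<rceil>" using By by linarith
  thus "real B + (\<Sum>x\<in>{x \<in> S_eps e. x \<le> t - e}. 0) + of_int \<lfloor>real B / (1 - t)\<rfloor>
        \<le> 2 * of_int \<lceil>real B / (1 - t)\<rceil>" unfolding y_def by simp
qed

theorem lemma2p2:
  shows "\<exists>C>0. \<forall>\<epsilon>>0. \<forall>(B::nat) (c::real). real B \<ge> 1 / \<epsilon> \<longrightarrow> c > 0 \<longrightarrow>
           \<bar>LP_opt \<epsilon> B c - alpha_star\<bar> \<le> C * \<epsilon>"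
proof -
  obtain x0 :: real where x0: "1/10 \<le> x0" "x0 \<le> 1/3" "alpha_star = 1/(1-x0)"
    "ln x0 = 3 - ln 2 - 1/x0" by (rule x0_facts)
  have al1: "1 \<le> alpha_star" unfolding x0(3) using x0(1,2) by (simp add: field_simps)
  have al2: "alpha_star \<le> 3/2" unfolding x0(3) using x0(1,2) by (simp add: field_simps)
  have "\<bar>LP_opt e B c - alpha_star\<bar> \<le> 200 * e"
    if e: "0 < e" and B: "1/e \<le> real B" and c: "0 < c" for e B c
  proof -
    define A where "A = {a. \<exists>N0 N. LP_feasible e B c a N0 N}"
    have opt: "LP_opt e B c = Inf A" unfolding LP_opt_def A_def ..
    have Bp: "0 < real B" using B e by (meson divide_pos_pos less_le_trans zero_less_one)
    have two: "2 \<in> A" unfolding A_def using feas_two[OF x0(1-3) e Bp] by blast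
    have ne: "A \<noteq> {}" using two by blast
    have bdd: "bdd_below A" unfolding bdd_below_def A_def using feas_nonneg[OF Bp] by blast
    have o2: "Inf A \<le> 2" by (rule cInf_lower[OF two bdd])
    have o0: "0 \<le> Inf A" by (rule cInf_greatest[OF ne]) (use feas_nonneg[OF Bp] in \<open>auto simp: A_def\<close>)
    show ?thesis
    proof (cases "e \<le> 1/100")
      case False
      thus ?thesis unfolding opt using o2 o0 al1 al2 by linarith
    next
      case True
      have lo: "alpha_star - 11 * e \<le> Inf A"
        by (rule cInf_greatest[OF ne]) (use lower[OF x0 e True B c] in \<open>auto simp: A_def\<close>)
      have "alpha_star * (1 + 14*e) \<in> A" unfolding A_def using upper[OF x0 e True B] by blast
      hence "Inf A \<le> alpha_star * (1 + 14*e)" by (rule cInf_lower[OF _ bdd])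
      moreover have "alpha_star * (14*e) \<le> 3/2 * (14*e)" by (rule mult_right_mono) (use al2 e in auto)
      ultimately have hi: "Inf A \<le> alpha_star + 21 * e" by (simp add: algebra_simps)
      show ?thesis unfolding opt using lo hi e by linarith
    qed
  qed
  thus ?thesis by (intro exI[of _ 200]) auto
qed

end
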